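(* Let $G$ be a finite group and $\omega$ a normalized $3$-cocycle on $G$ with values in $\mathbb C^\times$. For $x\in G$ let $V_x$ be the one-dimensional simple $H(G,\omega)$-module with character $\chi_x$ (evaluation at $x$, i.e. $\chi_x(e(g))=\delta_{g,x}$). Then for every positive integer $n$, $$\nu_n(V_x)=\delta_{x^n,1}\prod_{r=1}^{n-1}\omega(x,x^r,x).$$ In particular $\nu_n(V_x)=0$ if $n$ is not a multiple of the order $o(x)$ of $x$; $\nu_{o(x)}(V_x)$ is a root of unity whose order equals the order of the cohomology class $\mathrm{res}_{\langle x\rangle}[\omega]\in H^3(\langle x\rangle,\mathbb C^\times)$; and $\nu_{s\cdot o(x)}(V_x)=\nu_{o(x)}(V_x)^s$ for all $s\in\mathbb N$.
   Context: $H(G,\omega)=(\mathbb C[G]^*,\Delta,\epsilon,\phi,\alpha,\beta,S)$ is the quasi-Hopf algebra whose algebra, comultiplication, counit and antipode are those of the commutative Hopf algebra $\mathbb C[G]^*$ of functions on $G$ (with basis $\{e(g)\}_{g\in G}$ dual to $G$, $e(g)e(h)=\delta_{g,h}e(g)$, $\Delta(e(g))=\sum_{ab=g}e(a)\otimes e(b)$, $\epsilon(e(g))=\delta_{g,1}$, $S(e(g))=e(g^{-1})$), and $\phi=\sum_{a,b,c\in G}\omega(a,b,c)e(a)\otimes e(b)\otimes e(c)$, $\alpha=1$, $\beta=\sum_a\omega(a,a^{-1},a)^{-1}e(a)$. For a finite-dimensional module $W$ over a semisimple quasi-Hopf algebra $A=(A,\Delta,\epsilon,\phi,\alpha,\beta,S)$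 over $\mathbb C$, $\nu_n(W)$ is the $n$-th Frobenius–Schur indicator defined in the category $\mathcal C(A)$ of finite-dimensional $A$-modules (tensor via $\Delta$, unit $I=\mathbb C$, associativity $\Phi$ = action of $\phi$, left dual with $\mathrm{ev}(f\otimes w)=f(\alpha w)$, $\mathrm{db}(1)=\sum_i\beta w_i\otimes w^i$, action on $W^\vee$ via $S$) with pivotal structure $j$ the unique monoidal natural isomorphism $\mathrm{Id}\to(-)^{\vee\vee}$ with $\mathrm{ev}\circ(j_W\otimes\mathrm{id})\circ\mathrm{db}=\dim W$: $\nu_n(W)=\mathrm{Tr}(E_W^{(n)})$, where $E_W^{(n)}=\mathrm{Hom}(I,\Phi^{(n)})\circ A^{-1}\circ T\circ A$ on $\mathrm{Hom}(I,W^{\otimes n})$ (rightmost bracketing), $A(f)=(\mathrm{ev}\otimes\mathrm{id})\Phi^{-1}(\mathrm{id}_{W^\vee}\otimes f)$ for $f\in\mathrm{Hom}(I,W\otimes W^{\otimes(n-1)})$, $T(g)=j_W^{-1}\circ g^\vee$, $\Phi^{(1)}=\mathrm{id}$, $\Phi^{(n+1)}=(\mathrm{id}\otimes\Phi^{(n)})\circ\Phi$. *)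

theory Defs
  imports "HOL-Algebra.Multiplicative_Group"
begin

(* A module over the commutative semisimple algebra C[G]^* is the same as a
   G-graded vector space; we represent a module (up to isomorphism) by a
   finite homogeneous basis (a set of abstract indices) together with the
   degree of each basis vector: e(g) acts on a basis vector of degree h by
   delta_{g,h}.  Linear maps are matrices  tgt-index => src-index => complex.
   ------------------------------------------------------------------------ *)

datatype idx = Leaf nat | Unit | Pair idx idx | Dual idx

type_synonym 'g obj = "idx set \<times> (idx \<Rightarrow> 'g)"
type_synonym mat = "idx \<Rightarrow> idx \<Rightarrow> complex"

definition bas :: "'g obj \<Rightarrow> idx set" where "bas X = fst X"
definition dg :: "'g obj \<Rightarrow> idx \<Rightarrow> 'g" where "dg X = snd X"

text \<open>Unit object I = C (trivial module via the counit).\<close>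
definition unito :: "('g,'b) monoid_scheme \<Rightarrow> 'g obj" where
  "unito G = ({Unit}, \<lambda>_. \<one>\<^bsub>G\<^esub>)"

text \<open>Tensor product of modules via Delta(e(g)) = sum_{ab=g} e(a) (x) e(b).\<close>
definition tens :: "('g,'b) monoid_scheme \<Rightarrow> 'g obj \<Rightarrow> 'g obj \<Rightarrow> 'g obj" where
  "tens G X Y = ({Pair a b | a b. a \<in> bas X \<and> b \<in> bas Y},
     (\<lambda>i. case i of Pair a b \<Rightarrow> dg X a \<otimes>\<^bsub>G\<^esub> dg Y b | _ \<Rightarrow> \<one>\<^bsub>G\<^esub>))"

text \<open>Left dual module, action via the antipode S(e(g)) = e(g^-1):
  the dual basis vector of a basis vector of degree g has degree g^-1.\<close>
definition dualo :: "('g,'b) monoid_scheme \<Rightarrow> 'g obj \<Rightarrow> 'g obj" where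
  "dualo G X = (Dual ` bas X,
     (\<lambda>i. case i of Dual a \<Rightarrow> inv\<^bsub>G\<^esub> (dg X a) | _ \<Rightarrow> \<one>\<^bsub>G\<^esub>))"

definition dimo :: "'g obj \<Rightarrow> nat" where "dimo X = card (bas X)"

definition hom :: "'g obj \<Rightarrow> 'g obj \<Rightarrow> mat set" where
  "hom X Y = {m. \<forall>t s. m t s \<noteq> 0 \<longrightarrow> t \<in> bas Y \<and> s \<in> bas X \<and> dg Y t = dg X s}"

definition idm :: "'g obj \<Rightarrow> mat" where
  "idm X = (\<lambda>t s. if s \<in> bas X \<and> t = s then 1 else 0)"

text \<open>Composition m o n, where n : X -> Y and m : Y -> Z.\<close>
definition comp :: "'g obj \<Rightarrow> mat \<Rightarrow> mat \<Rightarrow> mat" where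
  "comp Y m n = (\<lambda>t s. \<Sum>k\<in>bas Y. m t k * n k s)"

definition tensm :: "mat \<Rightarrow> mat \<Rightarrow> mat" where
  "tensm f g = (\<lambda>t s. case (t, s) of (Pair t1 t2, Pair s1 s2) \<Rightarrow> f t1 s1 * g t2 s2 | _ \<Rightarrow> 0)"

text \<open>Associativity constraint Phi : (X (x) Y) (x) Z -> X (x) (Y (x) Z), the action of phi.\<close>
definition assoc :: "('g,'b) monoid_scheme \<Rightarrow> ('g \<Rightarrow> 'g \<Rightarrow> 'g \<Rightarrow> complex)
    \<Rightarrow> 'g obj \<Rightarrow> 'g obj \<Rightarrow> 'g obj \<Rightarrow> mat" where
  "assoc G \<omega> X Y Z = (\<lambda>t s. case (t, s) of
     (Pair a (Pair b c), Pair (Pair a' b') c') \<Rightarrow>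
        if a = a' \<and> b = b' \<and> c = c' \<and> a \<in> bas X \<and> b \<in> bas Y \<and> c \<in> bas Z
        then \<omega> (dg X a) (dg Y b) (dg Z c) else 0
   | _ \<Rightarrow> 0)"

definition assoc_inv :: "('g,'b) monoid_scheme \<Rightarrow> ('g \<Rightarrow> 'g \<Rightarrow> 'g \<Rightarrow> complex)
    \<Rightarrow> 'g obj \<Rightarrow> 'g obj \<Rightarrow> 'g obj \<Rightarrow> mat" where
  "assoc_inv G \<omega> X Y Z = (\<lambda>t s. case (t, s) of
     (Pair (Pair a b) c, Pair a' (Pair b' c')) \<Rightarrow>
        if a = a' \<and> b = b' \<and> c = c' \<and> a \<in> bas X \<and> b \<in> bas Y \<and> c \<in> bas Z
        then inverse (\<omega> (dg X a) (dg Y b) (dg Z c)) else 0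
   | _ \<Rightarrow> 0)"

text \<open>Unit constraints (canonical, since phi is normalized).\<close>
definition lunit :: "'g obj \<Rightarrow> mat" where
  "lunit X = (\<lambda>t s. if t \<in> bas X \<and> s = Pair Unit t then 1 else 0)"
definition lunit_inv :: "'g obj \<Rightarrow> mat" where
  "lunit_inv X = (\<lambda>t s. if s \<in> bas X \<and> t = Pair Unit s then 1 else 0)"
definition runit :: "'g obj \<Rightarrow> mat" where
  "runit X = (\<lambda>t s. if t \<in> bas X \<and> s = Pair t Unit then 1 else 0)"
definition runit_inv :: "'g obj \<Rightarrow> mat" where
  "runit_inv X = (\<lambda>t s. if s \<in> bas X \<and> t = Pair s Unit then 1 else 0)"

text \<open>beta = sum_a omega(a,a^-1,a)^-1 e(a); alpha = 1.\<close>
definition betaH :: "('g,'b) monoid_scheme \<Rightarrow> ('g \<Rightarrow> 'g \<Rightarrow> 'g \<Rightarrow> complex) \<Rightarrow> 'g \<Rightarrow> complex" where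
  "betaH G \<omega> a = inverse (\<omega> a (inv\<^bsub>G\<^esub> a) a)"

text \<open>ev : X^v (x) X -> I,  ev(f (x) w) = f(alpha w) with alpha = 1.\<close>
definition ev :: "'g obj \<Rightarrow> mat" where
  "ev X = (\<lambda>t s. case s of Pair (Dual i) j \<Rightarrow>
      if t = Unit \<and> i = j \<and> i \<in> bas X then 1 else 0 | _ \<Rightarrow> 0)"

text \<open>db : I -> X (x) X^v,  db(1) = sum_i beta w_i (x) w^i.\<close>
definition db :: "('g,'b) monoid_scheme \<Rightarrow> ('g \<Rightarrow> 'g \<Rightarrow> 'g \<Rightarrow> complex) \<Rightarrow> 'g obj \<Rightarrow> mat" where
  "db G \<omega> X = (\<lambda>t s. case t of Pair i (Dual j) \<Rightarrow>
      if s = Unit \<and> i = j \<and> i \<in> bas X then betaH G \<omega> (dg X i) else 0 | _ \<Rightarrow> 0)"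

definition dualm :: "('g,'b) monoid_scheme \<Rightarrow> ('g \<Rightarrow> 'g \<Rightarrow> 'g \<Rightarrow> complex)
    \<Rightarrow> 'g obj \<Rightarrow> 'g obj \<Rightarrow> mat \<Rightarrow> mat" where
  "dualm G \<omega> X Y g =
    (let Yd = dualo G Y; Xd = dualo G X; I = unito G in
     comp (tens G I Xd) (lunit Xd)
      (comp (tens G (tens G Yd Y) Xd) (tensm (ev Y) (idm Xd))
       (comp (tens G Yd (tens G Y Xd)) (assoc_inv G \<omega> Yd Y Xd)
        (comp (tens G Yd (tens G X Xd)) (tensm (idm Yd) (tensm g (idm Xd)))
         (comp (tens G Yd I) (tensm (idm Yd) (db G \<omega> X)) (runit_inv Yd))))))"

text \<open>Candidate natural isomorphisms Id -> (-)^vv: w_i |-> c(deg w_i) w^ii.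
  (By naturality every natural isomorphism Id -> (-)^vv has this form.)\<close>
definition jc :: "('g \<Rightarrow> complex) \<Rightarrow> 'g obj \<Rightarrow> mat" where
  "jc c X = (\<lambda>t s. if s \<in> bas X \<and> t = Dual (Dual s) then c (dg X s) else 0)"

definition piv_ok :: "('g,'b) monoid_scheme \<Rightarrow> ('g \<Rightarrow> 'g \<Rightarrow> 'g \<Rightarrow> complex) \<Rightarrow> ('g \<Rightarrow> complex) \<Rightarrow> bool" where
  "piv_ok G \<omega> c \<longleftrightarrow> (\<forall>g\<in>carrier G. c g \<noteq> 0) \<and> (\<forall>g. g \<notin> carrier G \<longrightarrow> c g = 0) \<and>
     (\<forall>X::'g obj. finite (bas X) \<and> dg X ` bas X \<subseteq> carrier G \<longrightarrow>
        comp (tens G (dualo G (dualo G X)) (dualo G X)) (ev (dualo G X))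
          (comp (tens G X (dualo G X)) (tensm (jc c X) (idm (dualo G X))) (db G \<omega> X))
        = (\<lambda>t s. of_nat (dimo X) * idm (unito G) t s))"

text \<open>The pivotal structure j (its scalar function), normalised by
  ev o (j (x) id) o db = dim.\<close>
definition pivc :: "('g,'b) monoid_scheme \<Rightarrow> ('g \<Rightarrow> 'g \<Rightarrow> 'g \<Rightarrow> complex) \<Rightarrow> 'g \<Rightarrow> complex" where
  "pivc G \<omega> = (THE c. piv_ok G \<omega> c)"

definition jW :: "('g,'b) monoid_scheme \<Rightarrow> ('g \<Rightarrow> 'g \<Rightarrow> 'g \<Rightarrow> complex) \<Rightarrow> 'g obj \<Rightarrow> mat" where
  "jW G \<omega> X = jc (pivc G \<omega>) X"

definition jW_inv :: "('g,'b) monoid_scheme \<Rightarrow> ('g \<Rightarrow> 'g \<Rightarrow> 'g \<Rightarrow> complex) \<Rightarrow> 'g obj \<Rightarrow> mat" where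
  "jW_inv G \<omega> X = (\<lambda>t s. if t \<in> bas X \<and> s = Dual (Dual t) then inverse (pivc G \<omega> (dg X t)) else 0)"

definition Amap :: "('g,'b) monoid_scheme \<Rightarrow> ('g \<Rightarrow> 'g \<Rightarrow> 'g \<Rightarrow> complex)
    \<Rightarrow> 'g obj \<Rightarrow> 'g obj \<Rightarrow> mat \<Rightarrow> mat" where
  "Amap G \<omega> V U f =
    (let Vd = dualo G V; I = unito G in
     comp (tens G I U) (lunit U)
      (comp (tens G (tens G Vd V) U) (tensm (ev V) (idm U))
       (comp (tens G Vd (tens G V U)) (assoc_inv G \<omega> Vd V U)
        (comp (tens G Vd I) (tensm (idm Vd) f) (runit_inv Vd)))))"

definition Ainv :: "('g,'b) monoid_scheme \<Rightarrow> ('g \<Rightarrow> 'g \<Rightarrow> 'g \<Rightarrow> complex)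
    \<Rightarrow> 'g obj \<Rightarrow> 'g obj \<Rightarrow> mat \<Rightarrow> mat" where
  "Ainv G \<omega> V U = inv_into (hom (unito G) (tens G V U)) (Amap G \<omega> V U)"

definition Tmap :: "('g,'b) monoid_scheme \<Rightarrow> ('g \<Rightarrow> 'g \<Rightarrow> 'g \<Rightarrow> complex)
    \<Rightarrow> 'g obj \<Rightarrow> 'g obj \<Rightarrow> mat \<Rightarrow> mat" where
  "Tmap G \<omega> V U g = comp (dualo G (dualo G V)) (jW_inv G \<omega> V) (dualm G \<omega> (dualo G V) U g)"

fun tpow :: "('g,'b) monoid_scheme \<Rightarrow> 'g obj \<Rightarrow> nat \<Rightarrow> 'g obj" where
  "tpow G W 0 = unito G"
| "tpow G W (Suc n) = tens G W (tpow G W n)"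

fun phin :: "('g,'b) monoid_scheme \<Rightarrow> ('g \<Rightarrow> 'g \<Rightarrow> 'g \<Rightarrow> complex) \<Rightarrow> 'g obj \<Rightarrow> nat \<Rightarrow> mat" where
  "phin G \<omega> W 0 = (\<lambda>_ _. 0)"
| "phin G \<omega> W (Suc 0) = comp W (runit_inv W) (lunit W)"
| "phin G \<omega> W (Suc (Suc k)) =
     comp (tens G W (tens G (tpow G W k) W)) (tensm (idm W) (phin G \<omega> W (Suc k)))
       (assoc G \<omega> W (tpow G W k) W)"

definition Emap :: "('g,'b) monoid_scheme \<Rightarrow> ('g \<Rightarrow> 'g \<Rightarrow> 'g \<Rightarrow> complex)
    \<Rightarrow> nat \<Rightarrow> 'g obj \<Rightarrow> mat \<Rightarrow> mat" where
  "Emap G \<omega> n W f =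
    (let U = tpow G W (n - 1) in
     comp (tens G U W) (phin G \<omega> W n)
       (Ainv G \<omega> U W (Tmap G \<omega> W U (Amap G \<omega> W U f))))"

definition elem :: "idx \<Rightarrow> mat" where
  "elem b = (\<lambda>t s. if t = b \<and> s = Unit then 1 else 0)"

text \<open>n-th Frobenius-Schur indicator: trace of E_W^(n) on Hom(I, W^(x)n),
  computed in the basis {elem b | b basis vector of W^(x)n of degree 1}.\<close>
definition FS_ind :: "('g,'b) monoid_scheme \<Rightarrow> ('g \<Rightarrow> 'g \<Rightarrow> 'g \<Rightarrow> complex) \<Rightarrow> nat \<Rightarrow> 'g obj \<Rightarrow> complex" where
  "FS_ind G \<omega> n W =
    (\<Sum>b\<in>{b \<in> bas (tpow G W n). dg (tpow G W n) b = \<one>\<^bsub>G\<^esub>}. Emap G \<omega> n W (elem b) b Unit)"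

definition Vx :: "'g \<Rightarrow> 'g obj" where
  "Vx x = ({Leaf 0}, \<lambda>_. x)"

definition normalized_3cocycle :: "('g,'b) monoid_scheme \<Rightarrow> ('g \<Rightarrow> 'g \<Rightarrow> 'g \<Rightarrow> complex) \<Rightarrow> bool" where
  "normalized_3cocycle G \<omega> \<longleftrightarrow>
     (\<forall>a\<in>carrier G. \<forall>b\<in>carrier G. \<forall>c\<in>carrier G. \<omega> a b c \<noteq> 0) \<and>
     (\<forall>a\<in>carrier G. \<forall>b\<in>carrier G. \<forall>c\<in>carrier G. \<forall>d\<in>carrier G.
        \<omega> b c d * \<omega> a (b \<otimes>\<^bsub>G\<^esub> c) d * \<omega> a b c
          = \<omega> (a \<otimes>\<^bsub>G\<^esub> b) c d * \<omega> a b (c \<otimes>\<^bsub>G\<^esub> d)) \<and>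
     (\<forall>a\<in>carrier G. \<forall>b\<in>carrier G.
        \<omega> \<one>\<^bsub>G\<^esub> a b = 1 \<and> \<omega> a \<one>\<^bsub>G\<^esub> b = 1 \<and> \<omega> a b \<one>\<^bsub>G\<^esub> = 1)"

definition cyc :: "('g,'b) monoid_scheme \<Rightarrow> 'g \<Rightarrow> 'g set" where
  "cyc G x = {x [^]\<^bsub>G\<^esub> (k::nat) | k. True}"

definition is_coboundary_on :: "('g,'b) monoid_scheme \<Rightarrow> 'g set \<Rightarrow> ('g \<Rightarrow> 'g \<Rightarrow> 'g \<Rightarrow> complex) \<Rightarrow> bool" where
  "is_coboundary_on G H \<theta> \<longleftrightarrow> (\<exists>\<mu> :: 'g \<Rightarrow> 'g \<Rightarrow> complex.
     (\<forall>a\<in>H. \<forall>b\<in>H. \<mu> a b \<noteq> 0) \<and>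
     (\<forall>a\<in>H. \<forall>b\<in>H. \<forall>c\<in>H.
        \<theta> a b c = \<mu> b c * \<mu> a (b \<otimes>\<^bsub>G\<^esub> c) / (\<mu> (a \<otimes>\<^bsub>G\<^esub> b) c * \<mu> a b)))"

definition res_class_order :: "('g,'b) monoid_scheme \<Rightarrow> ('g \<Rightarrow> 'g \<Rightarrow> 'g \<Rightarrow> complex) \<Rightarrow> 'g \<Rightarrow> nat" where
  "res_class_order G \<omega> x =
     (LEAST k. 0 < k \<and> is_coboundary_on G (cyc G x) (\<lambda>a b c. \<omega> a b c ^ k))"

end

theory Submission
  imports Defs
begin


definition sm :: "idx \<Rightarrow> idx \<Rightarrow> complex \<Rightarrow> mat" where
  "sm a b v = (\<lambda>t s. if t = a \<and> s = b then v else 0)"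

lemma comp_sm: "bas Y = {k} \<Longrightarrow> comp Y (sm a k v) (sm k c w) = sm a c (v * w)"
  by (auto simp: comp_def sm_def fun_eq_iff)

lemma tensm_sm: "tensm (sm a b v) (sm c d w) = sm (Pair a c) (Pair b d) (v * w)"
  by (auto simp: tensm_def sm_def fun_eq_iff split: idx.split)

lemma idm_sm: "bas X = {k} \<Longrightarrow> idm X = sm k k 1"
  by (auto simp: idm_def sm_def fun_eq_iff)

lemma lunit_sm: "bas X = {k} \<Longrightarrow> lunit X = sm k (Pair Unit k) 1"
  by (auto simp: lunit_def sm_def fun_eq_iff)

lemma runit_inv_sm: "bas X = {k} \<Longrightarrow> runit_inv X = sm (Pair k Unit) k 1"
  by (auto simp: runit_inv_def sm_def fun_eq_iff)

lemma ev_sm: "bas X = {k} \<Longrightarrow> ev X = sm Unit (Pair (Dual k) k) 1"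
  by (auto simp: ev_def sm_def fun_eq_iff split: idx.split)

lemma db_sm: "bas X = {k} \<Longrightarrow> db G \<omega> X = sm (Pair k (Dual k)) Unit (betaH G \<omega> (dg X k))"
  by (auto simp: db_def sm_def fun_eq_iff split: idx.split)

lemma assoc_sm: "bas X = {a} \<Longrightarrow> bas Y = {b} \<Longrightarrow> bas Z = {c} \<Longrightarrow>
  assoc G \<omega> X Y Z = sm (Pair a (Pair b c)) (Pair (Pair a b) c) (\<omega> (dg X a) (dg Y b) (dg Z c))"
  by (auto simp: assoc_def sm_def fun_eq_iff split: idx.split)

lemma assoc_inv_sm: "bas X = {a} \<Longrightarrow> bas Y = {b} \<Longrightarrow> bas Z = {c} \<Longrightarrow>
  assoc_inv G \<omega> X Y Z = sm (Pair (Pair a b) c) (Pair a (Pair b c)) (inverse (\<omega> (dg X a) (dg Y b) (dg Z c)))"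
  by (auto simp: assoc_inv_def sm_def fun_eq_iff split: idx.split)

lemma jW_inv_sm: "bas X = {k} \<Longrightarrow> jW_inv G \<omega> X = sm k (Dual (Dual k)) (inverse (pivc G \<omega> (dg X k)))"
  by (auto simp: jW_inv_def sm_def fun_eq_iff)

lemma elem_sm: "elem b = sm b Unit 1"
  by (simp add: elem_def sm_def)

lemma bas_unito[simp]: "bas (unito G) = {Unit}"
  by (simp add: unito_def bas_def)
lemma dg_unito[simp]: "dg (unito G) i = \<one>\<^bsub>G\<^esub>"
  by (simp add: unito_def dg_def)
lemma bas_tens: "bas (tens G X Y) = (\<lambda>(a,b). Pair a b) ` (bas X \<times> bas Y)"
  by (auto simp: tens_def bas_def)
lemma dg_tens[simp]: "dg (tens G X Y) (Pair a b) = dg X a \<otimes>\<^bsub>G\<^esub> dg Y b"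
  by (simp add: tens_def dg_def)
lemma bas_dualo[simp]: "bas (dualo G X) = Dual ` bas X"
  by (simp add: dualo_def bas_def)
lemma dg_dualo[simp]: "dg (dualo G X) (Dual a) = inv\<^bsub>G\<^esub> (dg X a)"
  by (simp add: dualo_def dg_def)

lemmas mat_simps = comp_sm tensm_sm idm_sm lunit_sm runit_inv_sm ev_sm db_sm assoc_sm assoc_inv_sm
  jW_inv_sm bas_tens

lemma Amap_sm: assumes "bas V = {v}" "bas U = {u}"
  shows "Amap G \<omega> V U (sm (Pair v u) Unit c) =
     sm u (Dual v) (c * inverse (\<omega> (inv\<^bsub>G\<^esub> (dg V v)) (dg V v) (dg U u)))"
  using assms by (simp add: Amap_def Let_def mat_simps mult.commute)

lemma dualm_sm: assumes "bas X = {p}" "bas Y = {q}"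
  shows "dualm G \<omega> X Y (sm q p c) =
     sm (Dual p) (Dual q) (c * betaH G \<omega> (dg X p) * inverse (\<omega> (inv\<^bsub>G\<^esub> (dg Y q)) (dg Y q) (inv\<^bsub>G\<^esub> (dg X p))))"
  using assms by (simp add: dualm_def Let_def mat_simps mult.commute mult.left_commute)

lemma hom_single: assumes "bas X = {s0}" "bas Y = {t0}" "m \<in> hom X Y"
  shows "m = sm t0 s0 (m t0 s0)"
  using assms by (auto simp: hom_def sm_def fun_eq_iff)

lemma sm_eq_iff: "sm a b v = sm a b w \<longleftrightarrow> v = w"
  by (auto simp: sm_def fun_eq_iff)

lemma Ainv_sm: assumes V: "bas V = {v}" and U: "bas U = {u}"
  and deg: "dg V v \<otimes>\<^bsub>G\<^esub> dg U u = \<one>\<^bsub>G\<^esub>"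
  and nz: "\<omega> (inv\<^bsub>G\<^esub> (dg V v)) (dg V v) (dg U u) \<noteq> 0"
  shows "Ainv G \<omega> V U (sm u (Dual v) d) = sm (Pair v u) Unit (d * \<omega> (inv\<^bsub>G\<^esub> (dg V v)) (dg V v) (dg U u))"
proof -
  let ?H = "hom (unito G) (tens G V U)"
  have bt: "bas (tens G V U) = {Pair v u}" using V U by (simp add: bas_tens)
  have inj: "inj_on (Amap G \<omega> V U) ?H"
  proof (rule inj_onI)
    fix m1 m2 assume m1: "m1 \<in> ?H" and m2: "m2 \<in> ?H" and eq: "Amap G \<omega> V U m1 = Amap G \<omega> V U m2"
    have e1: "m1 = sm (Pair v u) Unit (m1 (Pair v u) Unit)" using hom_single[OF _ bt m1] by simp
    have e2: "m2 = sm (Pair v u) Unit (m2 (Pair v u) Unit)" using hom_single[OF _ bt m2] by simp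
    from eq have "Amap G \<omega> V U (sm (Pair v u) Unit (m1 (Pair v u) Unit)) = Amap G \<omega> V U (sm (Pair v u) Unit (m2 (Pair v u) Unit))"
      using e1 e2 by metis
    then have "m1 (Pair v u) Unit = m2 (Pair v u) Unit"
      using nz by (simp add: Amap_sm[OF V U] sm_eq_iff)
    then show "m1 = m2" using e1 e2 by metis
  qed
  have mem: "sm (Pair v u) Unit (d * \<omega> (inv\<^bsub>G\<^esub> (dg V v)) (dg V v) (dg U u)) \<in> ?H"
    using bt deg by (auto simp: hom_def sm_def)
  show ?thesis unfolding Ainv_def
    by (rule inv_into_f_eq[OF inj mem]) (use nz in \<open>simp add: Amap_sm[OF V U] mult.assoc\<close>)
qed

fun tp :: "idx \<Rightarrow> nat \<Rightarrow> idx" where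
  "tp w 0 = Unit"
| "tp w (Suc k) = Pair w (tp w k)"

lemma bas_tpow: "bas W = {w} \<Longrightarrow> bas (tpow G W k) = {tp w k}"
  by (induction k) (simp_all add: bas_tens)

lemma dg_tpow: assumes "group G" "dg W w \<in> carrier G"
  shows "dg (tpow G W k) (tp w k) = dg W w [^]\<^bsub>G\<^esub> k"
proof (induction k)
  case 0 then show ?case by simp
next
  case (Suc k) then show ?case using assms
    by (simp add: monoid.nat_pow_Suc2[OF group.is_monoid[OF assms(1)]] del: nat_pow_Suc)
qed

lemma phin_sm: assumes "bas W = {w}"
  shows "phin G \<omega> W (Suc k) = sm (tp w (Suc k)) (Pair (tp w k) w)
            (\<Prod>r<k. \<omega> (dg W w) (dg (tpow G W r) (tp w r)) (dg W w))"
proof (induction k)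
  case 0 then show ?case using assms by (simp add: mat_simps)
next
  case (Suc k) then show ?case using assms
    by (simp add: mat_simps bas_tpow del: tpow.simps)
qed

lemma Emap_sm: assumes W: "bas W = {w}"
  and deg: "dg (tpow G W m) (tp w m) \<otimes>\<^bsub>G\<^esub> dg W w = \<one>\<^bsub>G\<^esub>"
  and nz: "\<omega> (inv\<^bsub>G\<^esub> (dg (tpow G W m) (tp w m))) (dg (tpow G W m) (tp w m)) (dg W w) \<noteq> 0"
  shows "Emap G \<omega> (Suc m) W (elem (tp w (Suc m))) = sm (tp w (Suc m)) Unit
     ((\<Prod>r<m. \<omega> (dg W w) (dg (tpow G W r) (tp w r)) (dg W w)) *
      (inverse (pivc G \<omega> (dg W w)) *
       (inverse (\<omega> (inv\<^bsub>G\<^esub> (dg W w)) (dg W w) (dg (tpow G W m) (tp w m))) *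
        betaH G \<omega> (inv\<^bsub>G\<^esub> (dg W w)) *
        inverse (\<omega> (inv\<^bsub>G\<^esub> (dg (tpow G W m) (tp w m))) (dg (tpow G W m) (tp w m)) (inv\<^bsub>G\<^esub> (inv\<^bsub>G\<^esub> (dg W w))))) *
       \<omega> (inv\<^bsub>G\<^esub> (dg (tpow G W m) (tp w m))) (dg (tpow G W m) (tp w m)) (dg W w)))"
proof -
  have U: "bas (tpow G W m) = {tp w m}" using bas_tpow[OF W] .
  have A1: "Amap G \<omega> W (tpow G W m) (elem (tp w (Suc m))) = sm (tp w m) (Dual w)
      (inverse (\<omega> (inv\<^bsub>G\<^esub> (dg W w)) (dg W w) (dg (tpow G W m) (tp w m))))"
    using Amap_sm[OF W U, of G \<omega> 1] by (simp add: elem_sm)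
  have Wd: "bas (dualo G W) = {Dual w}" using W by simp
  have T1: "Tmap G \<omega> W (tpow G W m) (Amap G \<omega> W (tpow G W m) (elem (tp w (Suc m)))) =
     sm w (Dual (tp w m)) (inverse (pivc G \<omega> (dg W w)) *
       (inverse (\<omega> (inv\<^bsub>G\<^esub> (dg W w)) (dg W w) (dg (tpow G W m) (tp w m))) *
        betaH G \<omega> (inv\<^bsub>G\<^esub> (dg W w)) *
        inverse (\<omega> (inv\<^bsub>G\<^esub> (dg (tpow G W m) (tp w m))) (dg (tpow G W m) (tp w m)) (inv\<^bsub>G\<^esub> (inv\<^bsub>G\<^esub> (dg W w))))))"
    unfolding A1 Tmap_def dualm_sm[OF Wd U] using W by (simp add: mat_simps)
  show ?thesis
    unfolding Emap_def Let_def diff_Suc_1 T1 Ainv_sm[where G=G and \<omega>=\<omega>, OF U W deg nz]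
    using W U by (simp add: phin_sm[OF W] mat_simps del: tpow.simps)
qed



lemma sum_tens: assumes "finite (bas X)" "finite (bas Y)"
  shows "(\<Sum>k\<in>bas (tens G X Y). f k) = (\<Sum>a\<in>bas X. \<Sum>b\<in>bas Y. f (Pair a b))"
proof -
  have inj: "inj_on (\<lambda>(a,b). Pair a b) (bas X \<times> bas Y)" by (auto simp: inj_on_def)
  show ?thesis unfolding bas_tens sum.reindex[OF inj] o_def
    by (simp add: sum.cartesian_product case_prod_unfold)
qed

lemma sum_dual: "(\<Sum>b\<in>Dual ` A. f b) = (\<Sum>j\<in>A. f (Dual j))"
  by (simp add: sum.reindex inj_on_def)

lemma sum_dual2: "(\<Sum>b\<in>(\<lambda>x. Dual (Dual x)) ` A. f b) = (\<Sum>j\<in>A. f (Dual (Dual j)))"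
  by (simp add: sum.reindex inj_on_def)

lemma jc_sm: "bas X = {k} \<Longrightarrow> jc c X = sm (Dual (Dual k)) k (c (dg X k))"
  by (auto simp: jc_def sm_def fun_eq_iff)

definition c0 :: "('g,'b) monoid_scheme \<Rightarrow> ('g \<Rightarrow> 'g \<Rightarrow> 'g \<Rightarrow> complex) \<Rightarrow> 'g \<Rightarrow> complex" where
  "c0 G \<omega> = (\<lambda>g. if g \<in> carrier G then \<omega> g (inv\<^bsub>G\<^esub> g) g else 0)"

lemma piv_ok_c0: assumes grp: "group G" and coc: "normalized_3cocycle G \<omega>"
  shows "piv_ok G \<omega> (c0 G \<omega>)"
proof -
  have nz: "\<And>a b c. a \<in> carrier G \<Longrightarrow> b \<in> carrier G \<Longrightarrow> c \<in> carrier G \<Longrightarrow> \<omega> a b c \<noteq> 0"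
    using coc by (auto simp: normalized_3cocycle_def)
  have cb: "c0 G \<omega> g * betaH G \<omega> g = 1" if "g \<in> carrier G" for g
    using that nz[of g "inv\<^bsub>G\<^esub> g" g] group.inv_closed[OF grp that]
    by (simp add: c0_def betaH_def)
  have main: "comp (tens G (dualo G (dualo G X)) (dualo G X)) (ev (dualo G X))
          (comp (tens G X (dualo G X)) (tensm (jc (c0 G \<omega>) X) (idm (dualo G X))) (db G \<omega> X))
        = (\<lambda>t s. of_nat (dimo X) * idm (unito G) t s)"
    if fin: "finite (bas X)" and sub: "dg X ` bas X \<subseteq> carrier G" for X :: "'a obj"
  proof -
    let ?B = "bas X"
    have inner: "comp (tens G X (dualo G X)) (tensm (jc (c0 G \<omega>) X) (idm (dualo G X))) (db G \<omega> X) k s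
       = (\<Sum>a\<in>?B. if s = Unit \<and> k = Pair (Dual (Dual a)) (Dual a) then 1 else 0)" for k s
    proof -
      have "comp (tens G X (dualo G X)) (tensm (jc (c0 G \<omega>) X) (idm (dualo G X))) (db G \<omega> X) k s
         = (\<Sum>a\<in>?B. \<Sum>j\<in>?B. tensm (jc (c0 G \<omega>) X) (idm (dualo G X)) k (Pair a (Dual j)) * db G \<omega> X (Pair a (Dual j)) s)"
        unfolding comp_def using fin by (simp add: sum_tens sum_dual)
      also have "\<dots> = (\<Sum>a\<in>?B. tensm (jc (c0 G \<omega>) X) (idm (dualo G X)) k (Pair a (Dual a)) * (if s = Unit then betaH G \<omega> (dg X a) else 0))"
      proof (rule sum.cong[OF refl])
        fix a assume a: "a \<in> ?B"
        have "(\<Sum>j\<in>?B. tensm (jc (c0 G \<omega>) X) (idm (dualo G X)) k (Pair a (Dual j)) * db G \<omega> X (Pair a (Dual j)) s)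
          = (\<Sum>j\<in>?B. if a = j then tensm (jc (c0 G \<omega>) X) (idm (dualo G X)) k (Pair a (Dual a)) * (if s = Unit then betaH G \<omega> (dg X a) else 0) else 0)"
          by (rule sum.cong[OF refl]) (auto simp: db_def a)
        also have "\<dots> = tensm (jc (c0 G \<omega>) X) (idm (dualo G X)) k (Pair a (Dual a)) * (if s = Unit then betaH G \<omega> (dg X a) else 0)"
          using fin a by (simp add: sum.delta)
        finally show "(\<Sum>j\<in>?B. tensm (jc (c0 G \<omega>) X) (idm (dualo G X)) k (Pair a (Dual j)) * db G \<omega> X (Pair a (Dual j)) s) = \<dots>" .
      qed
      also have "\<dots> = (\<Sum>a\<in>?B. if s = Unit \<and> k = Pair (Dual (Dual a)) (Dual a) then 1 else 0)"
      proof (rule sum.cong[OF refl])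
        fix a assume a: "a \<in> ?B"
        have "dg X a \<in> carrier G" using a sub by auto
        then show "tensm (jc (c0 G \<omega>) X) (idm (dualo G X)) k (Pair a (Dual a)) * (if s = Unit then betaH G \<omega> (dg X a) else 0)
           = (if s = Unit \<and> k = Pair (Dual (Dual a)) (Dual a) then 1 else 0)"
          using a cb[of "dg X a"] by (auto simp: tensm_def jc_def idm_def split: idx.split)
      qed
      finally show ?thesis .
    qed
    show ?thesis
    proof (rule ext, rule ext)
      fix t s
      have "comp (tens G (dualo G (dualo G X)) (dualo G X)) (ev (dualo G X))
          (comp (tens G X (dualo G X)) (tensm (jc (c0 G \<omega>) X) (idm (dualo G X))) (db G \<omega> X)) t s
        = (\<Sum>i\<in>?B. \<Sum>j\<in>?B. ev (dualo G X) t (Pair (Dual (Dual i)) (Dual j)) *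
             (\<Sum>a\<in>?B. if s = Unit \<and> Pair (Dual (Dual i)) (Dual j) = Pair (Dual (Dual a)) (Dual a) then 1 else 0))"
        apply (subst comp_def)
        unfolding inner using fin by (simp add: sum_tens sum_dual sum_dual2)
      also have "\<dots> = (\<Sum>i\<in>?B. \<Sum>j\<in>?B. if j = i then (if t = Unit \<and> s = Unit then 1 else 0) else 0)"
      proof (rule sum.cong[OF refl], rule sum.cong[OF refl])
        fix i j assume i: "i \<in> ?B" and j: "j \<in> ?B"
        have "(\<Sum>a\<in>?B. if s = Unit \<and> Pair (Dual (Dual i)) (Dual j) = Pair (Dual (Dual a)) (Dual a) then 1 else 0)
           = (\<Sum>a\<in>?B. if a = i then (if s = Unit \<and> i = j then 1 else 0) else (0::complex))"
          by (rule sum.cong[OF refl]) auto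
        also have "\<dots> = (if s = Unit \<and> i = j then 1 else 0)" using fin i by (simp add: sum.delta')
        finally show "ev (dualo G X) t (Pair (Dual (Dual i)) (Dual j)) *
             (\<Sum>a\<in>?B. if s = Unit \<and> Pair (Dual (Dual i)) (Dual j) = Pair (Dual (Dual a)) (Dual a) then 1 else 0)
           = (if j = i then (if t = Unit \<and> s = Unit then 1 else 0) else 0)"
          using i by (auto simp: ev_def)
      qed
      also have "\<dots> = (if t = Unit \<and> s = Unit then of_nat (card ?B) else 0)"
        using fin by (simp add: sum.delta')
      also have "\<dots> = of_nat (dimo X) * idm (unito G) t s"
        by (auto simp: dimo_def idm_def)
      finally show "comp (tens G (dualo G (dualo G X)) (dualo G X)) (ev (dualo G X))
          (comp (tens G X (dualo G X)) (tensm (jc (c0 G \<omega>) X) (idm (dualo G X))) (db G \<omega> X)) t s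
          = of_nat (dimo X) * idm (unito G) t s" .
    qed
  qed
  show ?thesis unfolding piv_ok_def
    using nz main by (auto simp: c0_def group.inv_closed[OF grp])
qed

lemma piv_ok_unique: assumes grp: "group G" and ok: "piv_ok G \<omega> c"
  shows "c = c0 G \<omega>"
proof
  fix g
  show "c g = c0 G \<omega> g"
  proof (cases "g \<in> carrier G")
    case False then show ?thesis using ok by (simp add: piv_ok_def c0_def)
  next
    case True
    define X :: "'a obj" where "X = ({Leaf 0}, \<lambda>_. g)"
    have bX: "bas X = {Leaf 0}" and dX: "dg X (Leaf 0) = g" by (simp_all add: X_def bas_def dg_def)
    have "finite (bas X) \<and> dg X ` bas X \<subseteq> carrier G" using bX dX True by simp
    then have eq: "comp (tens G (dualo G (dualo G X)) (dualo G X)) (ev (dualo G X))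
          (comp (tens G X (dualo G X)) (tensm (jc c X) (idm (dualo G X))) (db G \<omega> X))
        = (\<lambda>t s. of_nat (dimo X) * idm (unito G) t s)"
      using ok unfolding piv_ok_def by blast
    have Xd: "bas (dualo G X) = {Dual (Leaf 0)}" using bX by simp
    have Xdd: "bas (dualo G (dualo G X)) = {Dual (Dual (Leaf 0))}" using bX by simp
    have "sm Unit Unit (c g * betaH G \<omega> g) = (\<lambda>t s. of_nat (dimo X) * idm (unito G) t s)"
      using eq bX dX by (simp add: mat_simps jc_sm[OF bX] ev_sm[OF Xd] mult.commute)
    then have "c g * betaH G \<omega> g = 1"
      using bX by (simp add: sm_def fun_eq_iff dimo_def idm_def split: if_splits)
    moreover have "\<omega> g (inv\<^bsub>G\<^esub> g) g \<noteq> 0"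
    proof
      assume "\<omega> g (inv\<^bsub>G\<^esub> g) g = 0"
      then show False using \<open>c g * betaH G \<omega> g = 1\<close> by (simp add: betaH_def)
    qed
    ultimately show ?thesis using True by (simp add: c0_def betaH_def field_simps)
  qed
qed

lemma pivc_eq: assumes "group G" "normalized_3cocycle G \<omega>"
  shows "pivc G \<omega> = c0 G \<omega>"
  unfolding pivc_def
  apply (rule the_equality)
   apply (rule piv_ok_c0[OF assms])
  by (rule piv_ok_unique[OF assms(1)])



lemma cocycle_inv: assumes grp: "group G" and coc: "normalized_3cocycle G \<omega>" and x: "x \<in> carrier G"
  shows "\<omega> (inv\<^bsub>G\<^esub> x) x (inv\<^bsub>G\<^esub> x) * \<omega> x (inv\<^bsub>G\<^esub> x) x = 1"
proof -
  interpret group G by (rule grp)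
  have ix: "inv\<^bsub>G\<^esub> x \<in> carrier G" using x by simp
  have "\<omega> (inv\<^bsub>G\<^esub> x) x (inv\<^bsub>G\<^esub> x) * \<omega> x (inv\<^bsub>G\<^esub> x \<otimes>\<^bsub>G\<^esub> x) (inv\<^bsub>G\<^esub> x) * \<omega> x (inv\<^bsub>G\<^esub> x) x
      = \<omega> (x \<otimes>\<^bsub>G\<^esub> inv\<^bsub>G\<^esub> x) x (inv\<^bsub>G\<^esub> x) * \<omega> x (inv\<^bsub>G\<^esub> x) (x \<otimes>\<^bsub>G\<^esub> inv\<^bsub>G\<^esub> x)"
    using coc x ix unfolding normalized_3cocycle_def by blast
  then show ?thesis using coc x ix unfolding normalized_3cocycle_def by simp
qed

lemma FS_Vx: assumes grp: "group G" and coc: "normalized_3cocycle G \<omega>" and x: "x \<in> carrier G"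
  and n: "0 < n"
  shows "FS_ind G \<omega> n (Vx x) = (if x [^]\<^bsub>G\<^esub> n = \<one>\<^bsub>G\<^esub> then (\<Prod>r<n. \<omega> x (x [^]\<^bsub>G\<^esub> r) x) else 0)"
proof -
  interpret group G by (rule grp)
  obtain m where nm: "n = Suc m" using n by (cases n) auto
  define W where "W = Vx x"
  define w where "w = Leaf 0"
  have bW: "bas W = {w}" and dW: "dg W w = x" by (simp_all add: W_def w_def Vx_def bas_def dg_def)
  have dT: "dg (tpow G W r) (tp w r) = x [^]\<^bsub>G\<^esub> r" for r
    using dg_tpow[OF grp, of W w r] dW x by simp
  have nz: "\<And>a b c. a \<in> carrier G \<Longrightarrow> b \<in> carrier G \<Longrightarrow> c \<in> carrier G \<Longrightarrow> \<omega> a b c \<noteq> 0"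
    using coc by (auto simp: normalized_3cocycle_def)
  have set: "{b \<in> bas (tpow G W n). dg (tpow G W n) b = \<one>\<^bsub>G\<^esub>} = (if x [^]\<^bsub>G\<^esub> n = \<one>\<^bsub>G\<^esub> then {tp w n} else {})"
    using bas_tpow[OF bW, of G n] dT[of n] by auto
  show ?thesis
  proof (cases "x [^]\<^bsub>G\<^esub> n = \<one>\<^bsub>G\<^esub>")
    case False
    then show ?thesis unfolding FS_ind_def W_def[symmetric] set by simp
  next
    case True
    have deg: "dg (tpow G W m) (tp w m) \<otimes>\<^bsub>G\<^esub> dg W w = \<one>\<^bsub>G\<^esub>" using True nm dT dW by simp
    have xm: "x [^]\<^bsub>G\<^esub> m = inv\<^bsub>G\<^esub> x" using inv_equality[of "x [^]\<^bsub>G\<^esub> m" x] deg dT dW x by simp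
    have nz1: "\<omega> (inv\<^bsub>G\<^esub> (dg (tpow G W m) (tp w m))) (dg (tpow G W m) (tp w m)) (dg W w) \<noteq> 0"
      using nz dT dW x by simp
    have E: "FS_ind G \<omega> n W = Emap G \<omega> (Suc m) W (elem (tp w (Suc m))) (tp w (Suc m)) Unit"
      unfolding FS_ind_def set using True nm by simp
    have K: "\<omega> (inv\<^bsub>G\<^esub> x) x (inv\<^bsub>G\<^esub> x) * \<omega> x (inv\<^bsub>G\<^esub> x) x = 1" by (rule cocycle_inv[OF grp coc x])
    have A0: "\<omega> x (inv\<^bsub>G\<^esub> x) x \<noteq> 0" using nz x by simp
    have B: "\<omega> (inv\<^bsub>G\<^esub> x) x (inv\<^bsub>G\<^esub> x) = inverse (\<omega> x (inv\<^bsub>G\<^esub> x) x)" using K A0 by (simp add: field_simps)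
    show ?thesis
      unfolding W_def[symmetric] E Emap_sm[where \<omega>=\<omega>, OF bW deg nz1] using True
      by (simp add: sm_def dT dW xm pivc_eq[OF grp coc] c0_def x betaH_def B nm A0 field_simps)
  qed
qed



lemma prod_shift_eq: fixes f :: "nat \<Rightarrow> complex"
  assumes "f N = f 0" "f 0 \<noteq> 0"
  shows "(\<Prod>i<N. f (Suc i)) = (\<Prod>i<N. f i)"
proof -
  have "f 0 * (\<Prod>i<N. f (Suc i)) = (\<Prod>i<N. f i) * f N"
    using prod.lessThan_Suc_shift[of f N] prod.lessThan_Suc[of f N] by simp
  then show ?thesis using assms by (simp add: mult.commute)
qed

locale cycx =
  fixes G :: "('g, 'b) monoid_scheme" and x :: 'g
  assumes grp: "group G" and fin: "finite (carrier G)" and x: "x \<in> carrier G"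
begin

abbreviation N where "N \<equiv> group.ord G x"

lemma N_pos: "0 < N"
  using group.ord_ge_1[OF grp fin x] by simp

lemma xN: "x [^]\<^bsub>G\<^esub> N = \<one>\<^bsub>G\<^esub>"
  using group.pow_ord_eq_1[OF grp x] .

lemma xp: "x [^]\<^bsub>G\<^esub> (p::nat) \<in> carrier G"
  using monoid.nat_pow_closed[OF group.is_monoid[OF grp] x] .

lemma pmult: "x [^]\<^bsub>G\<^esub> (p::nat) \<otimes>\<^bsub>G\<^esub> x [^]\<^bsub>G\<^esub> (q::nat) = x [^]\<^bsub>G\<^esub> (p + q)"
  using monoid.nat_pow_mult[OF group.is_monoid[OF grp] x] .

lemma pow_mod: "x [^]\<^bsub>G\<^esub> (q::nat) = x [^]\<^bsub>G\<^esub> (q mod N)"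
proof -
  have "x [^]\<^bsub>G\<^esub> q = x [^]\<^bsub>G\<^esub> (N * (q div N)) \<otimes>\<^bsub>G\<^esub> x [^]\<^bsub>G\<^esub> (q mod N)"
    using pmult[of "N * (q div N)" "q mod N"] by simp
  also have "x [^]\<^bsub>G\<^esub> (N * (q div N)) = \<one>\<^bsub>G\<^esub>"
    using monoid.nat_pow_pow[OF group.is_monoid[OF grp] x, of N "q div N", symmetric] xN
    by (simp add: monoid.nat_pow_one[OF group.is_monoid[OF grp]])
  finally show ?thesis using xp[of "q mod N"] grp by (simp add: group.is_monoid monoid.l_one)
qed

lemma pow_add_N: "x [^]\<^bsub>G\<^esub> (i + m * N) = x [^]\<^bsub>G\<^esub> (i::nat)"
  using pow_mod[of "i + m * N"] pow_mod[of i] by simp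

lemma least_idx: "(LEAST j::nat. x [^]\<^bsub>G\<^esub> j = x [^]\<^bsub>G\<^esub> (q::nat)) = q mod N"
proof (rule Least_equality)
  show "x [^]\<^bsub>G\<^esub> (q mod N) = x [^]\<^bsub>G\<^esub> q" using pow_mod[of q] by simp
next
  fix j :: nat assume "x [^]\<^bsub>G\<^esub> j = x [^]\<^bsub>G\<^esub> q"
  then have "x [^]\<^bsub>G\<^esub> (j mod N) = x [^]\<^bsub>G\<^esub> (q mod N)" using pow_mod by metis
  moreover have "j mod N \<in> {0..N - 1}" "q mod N \<in> {0..N - 1}" using N_pos
    by (auto simp: less_Suc_eq_le[symmetric])
  ultimately have "j mod N = q mod N" using group.ord_inj[OF grp x] unfolding inj_on_def by blast
  then show "q mod N \<le> j" by (metis mod_less_eq_dividend)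
qed

definition P :: "('g \<Rightarrow> 'g \<Rightarrow> 'g \<Rightarrow> complex) \<Rightarrow> 'g \<Rightarrow> complex" where
  "P \<theta> a = (\<Prod>i<N. \<theta> a (x [^]\<^bsub>G\<^esub> i) x)"

lemma coc_nz: "normalized_3cocycle G \<theta> \<Longrightarrow> a \<in> carrier G \<Longrightarrow> b \<in> carrier G \<Longrightarrow> c \<in> carrier G \<Longrightarrow> \<theta> a b c \<noteq> 0"
  by (auto simp: normalized_3cocycle_def)

lemma coc_id: "normalized_3cocycle G \<theta> \<Longrightarrow> a \<in> carrier G \<Longrightarrow> b \<in> carrier G \<Longrightarrow> c \<in> carrier G \<Longrightarrow> d \<in> carrier G \<Longrightarrow>
   \<theta> b c d * \<theta> a (b \<otimes>\<^bsub>G\<^esub> c) d * \<theta> a b c = \<theta> (a \<otimes>\<^bsub>G\<^esub> b) c d * \<theta> a b (c \<otimes>\<^bsub>G\<^esub> d)"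
  by (auto simp: normalized_3cocycle_def)

lemma coc_norm: "normalized_3cocycle G \<theta> \<Longrightarrow> a \<in> carrier G \<Longrightarrow> b \<in> carrier G \<Longrightarrow>
  \<theta> \<one>\<^bsub>G\<^esub> a b = 1 \<and> \<theta> a \<one>\<^bsub>G\<^esub> b = 1 \<and> \<theta> a b \<one>\<^bsub>G\<^esub> = 1"
  by (auto simp: normalized_3cocycle_def)

lemma x1: "x [^]\<^bsub>G\<^esub> (1::nat) = x"
  using x grp by (simp add: group.is_monoid monoid.l_one)

lemma xSuc: "x [^]\<^bsub>G\<^esub> (p::nat) \<otimes>\<^bsub>G\<^esub> x = x [^]\<^bsub>G\<^esub> Suc p"
  by simp

lemma xSuc2: "x \<otimes>\<^bsub>G\<^esub> x [^]\<^bsub>G\<^esub> (p::nat) = x [^]\<^bsub>G\<^esub> Suc p"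
  using monoid.nat_pow_Suc2[OF group.is_monoid[OF grp] x] by simp

lemma P_one: assumes coc: "normalized_3cocycle G \<theta>" shows "P \<theta> \<one>\<^bsub>G\<^esub> = 1"
  unfolding P_def using coc_norm[OF coc xp x] by simp

lemma one_c: "\<one>\<^bsub>G\<^esub> \<in> carrier G"
  using monoid.one_closed[OF group.is_monoid[OF grp]] .

lemma P_pow: assumes coc: "normalized_3cocycle G \<theta>"
  shows "P \<theta> (x [^]\<^bsub>G\<^esub> (m::nat)) = P \<theta> x ^ m"
proof (induction m)
  case 0 then show ?case using P_one[OF coc] by simp
next
  case (Suc m)
  have eq: "\<theta> x (x [^]\<^bsub>G\<^esub> i) x * \<theta> (x [^]\<^bsub>G\<^esub> m) (x [^]\<^bsub>G\<^esub> Suc i) x * \<theta> (x [^]\<^bsub>G\<^esub> m) x (x [^]\<^bsub>G\<^esub> i)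
     = \<theta> (x [^]\<^bsub>G\<^esub> Suc m) (x [^]\<^bsub>G\<^esub> i) x * \<theta> (x [^]\<^bsub>G\<^esub> m) x (x [^]\<^bsub>G\<^esub> Suc i)" for i
    using coc_id[OF coc xp[of m] x xp[of i] x] by (simp add: xSuc2)
  have "(\<Prod>i<N. \<theta> x (x [^]\<^bsub>G\<^esub> i) x * \<theta> (x [^]\<^bsub>G\<^esub> m) (x [^]\<^bsub>G\<^esub> Suc i) x * \<theta> (x [^]\<^bsub>G\<^esub> m) x (x [^]\<^bsub>G\<^esub> i))
     = (\<Prod>i<N. \<theta> (x [^]\<^bsub>G\<^esub> Suc m) (x [^]\<^bsub>G\<^esub> i) x * \<theta> (x [^]\<^bsub>G\<^esub> m) x (x [^]\<^bsub>G\<^esub> Suc i))"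
    using eq by simp
  then have "P \<theta> x * (\<Prod>i<N. \<theta> (x [^]\<^bsub>G\<^esub> m) (x [^]\<^bsub>G\<^esub> Suc i) x) * (\<Prod>i<N. \<theta> (x [^]\<^bsub>G\<^esub> m) x (x [^]\<^bsub>G\<^esub> i))
     = P \<theta> (x [^]\<^bsub>G\<^esub> Suc m) * (\<Prod>i<N. \<theta> (x [^]\<^bsub>G\<^esub> m) x (x [^]\<^bsub>G\<^esub> Suc i))"
    unfolding P_def by (simp add: prod.distrib)
  moreover have "(\<Prod>i<N. \<theta> (x [^]\<^bsub>G\<^esub> m) (x [^]\<^bsub>G\<^esub> Suc i) x) = P \<theta> (x [^]\<^bsub>G\<^esub> m)"
    unfolding P_def
    by (rule prod_shift_eq[where f="\<lambda>i. \<theta> (x [^]\<^bsub>G\<^esub> m) (x [^]\<^bsub>G\<^esub> i) x"])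
       (use xN coc_nz[OF coc] xp x one_c in auto)
  moreover have "(\<Prod>i<N. \<theta> (x [^]\<^bsub>G\<^esub> m) x (x [^]\<^bsub>G\<^esub> Suc i)) = (\<Prod>i<N. \<theta> (x [^]\<^bsub>G\<^esub> m) x (x [^]\<^bsub>G\<^esub> i))"
    by (rule prod_shift_eq[where f="\<lambda>i. \<theta> (x [^]\<^bsub>G\<^esub> m) x (x [^]\<^bsub>G\<^esub> i)"])
       (use xN coc_nz[OF coc] xp x one_c in auto)
  moreover have "(\<Prod>i<N. \<theta> (x [^]\<^bsub>G\<^esub> m) x (x [^]\<^bsub>G\<^esub> i)) \<noteq> 0"
    using coc_nz[OF coc] xp x by (simp add: prod_zero_iff)
  ultimately have "P \<theta> (x [^]\<^bsub>G\<^esub> Suc m) = P \<theta> x * P \<theta> (x [^]\<^bsub>G\<^esub> m)"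
    by (simp add: mult.commute mult.left_commute)
  then show ?case using Suc.IH by simp
qed

end



lemma alg6: fixes t1 t2 t3 t4 t5 m1 m2 m3 m4 m5 m6 m7 :: complex
  assumes "t1 * t2 * t3 = t4 * t5" "t3 * m1 * m2 = m3 * m4" "t1 * m3 = m5" "t2 * m4 = m6" "t4 * m1 = m7"
  shows "t5 * m7 * m2 = m5 * m6"
proof -
  have "t5 * m7 * m2 = (t4 * t5) * m1 * m2" using assms(5) by (simp add: ac_simps)
  also have "\<dots> = t1 * t2 * (t3 * m1 * m2)" using assms(1) by (simp add: ac_simps)
  also have "\<dots> = (t1 * m3) * (t2 * m4)" using assms(2) by (simp add: ac_simps)
  finally show ?thesis using assms(3,4) by simp
qed

context cycx begin

definition muc :: "('g \<Rightarrow> 'g \<Rightarrow> 'g \<Rightarrow> complex) \<Rightarrow> 'g \<Rightarrow> 'g \<Rightarrow> complex" where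
  "muc \<theta> a b = (\<Prod>i<(LEAST j::nat. x [^]\<^bsub>G\<^esub> j = b). \<theta> a (x [^]\<^bsub>G\<^esub> i) x)"

lemma mu_pow: "muc \<theta> a (x [^]\<^bsub>G\<^esub> (q::nat)) = (\<Prod>i<q mod N. \<theta> a (x [^]\<^bsub>G\<^esub> i) x)"
  unfolding muc_def least_idx ..

lemma R1: assumes coc: "normalized_3cocycle G \<theta>" and P1: "P \<theta> x = 1"
  shows "\<theta> (x [^]\<^bsub>G\<^esub> p) (x [^]\<^bsub>G\<^esub> q) x * muc \<theta> (x [^]\<^bsub>G\<^esub> p) (x [^]\<^bsub>G\<^esub> (q::nat)) = muc \<theta> (x [^]\<^bsub>G\<^esub> (p::nat)) (x [^]\<^bsub>G\<^esub> Suc q)"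
proof -
  have tq: "\<theta> (x [^]\<^bsub>G\<^esub> p) (x [^]\<^bsub>G\<^esub> q) x = \<theta> (x [^]\<^bsub>G\<^esub> p) (x [^]\<^bsub>G\<^esub> (q mod N)) x"
    using pow_mod[of q] by simp
  show ?thesis
  proof (cases "Suc (q mod N) = N")
    case True
    then have "Suc q mod N = 0" by (simp add: mod_Suc)
    moreover have "(\<Prod>i<Suc (q mod N). \<theta> (x [^]\<^bsub>G\<^esub> p) (x [^]\<^bsub>G\<^esub> i) x) = 1"
      using True P_pow[OF coc, of p] P1 unfolding P_def by simp
    ultimately show ?thesis unfolding mu_pow tq by (simp add: mult.commute)
  next
    case False
    then have "Suc q mod N = Suc (q mod N)" by (simp add: mod_Suc)
    then show ?thesis unfolding mu_pow tq by (simp add: mult.commute)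
  qed
qed

lemma mu_one: "muc \<theta> a \<one>\<^bsub>G\<^esub> = 1"
  using mu_pow[of \<theta> a 0] by simp

lemma Rk: assumes coc: "normalized_3cocycle G \<theta>" and P1: "P \<theta> x = 1"
  shows "\<theta> (x [^]\<^bsub>G\<^esub> p) (x [^]\<^bsub>G\<^esub> q) (x [^]\<^bsub>G\<^esub> k) * muc \<theta> (x [^]\<^bsub>G\<^esub> (p + q)) (x [^]\<^bsub>G\<^esub> k) * muc \<theta> (x [^]\<^bsub>G\<^esub> p) (x [^]\<^bsub>G\<^esub> q)
     = muc \<theta> (x [^]\<^bsub>G\<^esub> q) (x [^]\<^bsub>G\<^esub> k) * muc \<theta> (x [^]\<^bsub>G\<^esub> (p::nat)) (x [^]\<^bsub>G\<^esub> ((q::nat) + (k::nat)))"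
proof (induction k arbitrary: p q)
  case 0
  then show ?case using coc_norm[OF coc xp xp] by (simp add: mu_one)
next
  case (Suc k)
  have c: "\<theta> (x [^]\<^bsub>G\<^esub> q) (x [^]\<^bsub>G\<^esub> k) x * \<theta> (x [^]\<^bsub>G\<^esub> p) (x [^]\<^bsub>G\<^esub> (q + k)) x * \<theta> (x [^]\<^bsub>G\<^esub> p) (x [^]\<^bsub>G\<^esub> q) (x [^]\<^bsub>G\<^esub> k)
     = \<theta> (x [^]\<^bsub>G\<^esub> (p + q)) (x [^]\<^bsub>G\<^esub> k) x * \<theta> (x [^]\<^bsub>G\<^esub> p) (x [^]\<^bsub>G\<^esub> q) (x [^]\<^bsub>G\<^esub> Suc k)"
    using coc_id[OF coc xp[of p] xp[of q] xp[of k] x] by (simp add: pmult)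
  show ?case
    using alg6[OF c Suc.IH R1[OF coc P1, of q k] R1[OF coc P1, of p "q + k"] R1[OF coc P1, of "p + q" k]]
    by simp
qed

lemma cob: assumes coc: "normalized_3cocycle G \<theta>" and P1: "P \<theta> x = 1"
  shows "is_coboundary_on G (cyc G x) \<theta>"
  unfolding is_coboundary_on_def
proof (rule exI[where x="muc \<theta>"], intro conjI ballI)
  fix a b assume "a \<in> cyc G x" "b \<in> cyc G x"
  then obtain p q where a: "a = x [^]\<^bsub>G\<^esub> (p::nat)" and b: "b = x [^]\<^bsub>G\<^esub> (q::nat)" by (auto simp: cyc_def)
  show "muc \<theta> a b \<noteq> 0" unfolding a b mu_pow
    using coc_nz[OF coc] xp x by (simp add: prod_zero_iff)
next
  fix a b c assume "a \<in> cyc G x" "b \<in> cyc G x" "c \<in> cyc G x"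
  then obtain p q k where a: "a = x [^]\<^bsub>G\<^esub> (p::nat)" and b: "b = x [^]\<^bsub>G\<^esub> (q::nat)"
    and c: "c = x [^]\<^bsub>G\<^esub> (k::nat)" by (auto simp: cyc_def)
  have nz: "muc \<theta> (x [^]\<^bsub>G\<^esub> p') (x [^]\<^bsub>G\<^esub> q') \<noteq> 0" for p' q' :: nat
    unfolding mu_pow using coc_nz[OF coc] xp x by (simp add: prod_zero_iff)
  show "\<theta> a b c = muc \<theta> b c * muc \<theta> a (b \<otimes>\<^bsub>G\<^esub> c) / (muc \<theta> (a \<otimes>\<^bsub>G\<^esub> b) c * muc \<theta> a b)"
    unfolding a b c pmult using Rk[OF coc P1, of p q k] nz[of "p+q" k] nz[of p q]
    by (simp add: field_simps)
qed

lemma cob_P: assumes coc: "normalized_3cocycle G \<theta>" and cb: "is_coboundary_on G (cyc G x) \<theta>"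
  shows "P \<theta> x = 1"
proof -
  obtain \<mu> where nz: "\<forall>a\<in>cyc G x. \<forall>b\<in>cyc G x. \<mu> a b \<noteq> 0"
    and eq: "\<forall>a\<in>cyc G x. \<forall>b\<in>cyc G x. \<forall>c\<in>cyc G x.
        \<theta> a b c = \<mu> b c * \<mu> a (b \<otimes>\<^bsub>G\<^esub> c) / (\<mu> (a \<otimes>\<^bsub>G\<^esub> b) c * \<mu> a b)"
    using cb unfolding is_coboundary_on_def by blast
  have inc: "x [^]\<^bsub>G\<^esub> (p::nat) \<in> cyc G x" for p by (auto simp: cyc_def)
  have xc: "x \<in> cyc G x" using inc[of 1] x1 by simp
  have t: "\<theta> x (x [^]\<^bsub>G\<^esub> r) x = \<mu> (x [^]\<^bsub>G\<^esub> r) x * \<mu> x (x [^]\<^bsub>G\<^esub> Suc r) /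
        (\<mu> (x [^]\<^bsub>G\<^esub> Suc r) x * \<mu> x (x [^]\<^bsub>G\<^esub> r))" for r :: nat
    using eq xc inc[of r] by (simp add: xSuc2)
  have s1: "(\<Prod>r<N. \<mu> (x [^]\<^bsub>G\<^esub> Suc r) x) = (\<Prod>r<N. \<mu> (x [^]\<^bsub>G\<^esub> r) x)"
    by (rule prod_shift_eq[where f="\<lambda>r. \<mu> (x [^]\<^bsub>G\<^esub> r) x"]) (use xN nz inc[of 0] inc xc in auto)
  have s2: "(\<Prod>r<N. \<mu> x (x [^]\<^bsub>G\<^esub> Suc r)) = (\<Prod>r<N. \<mu> x (x [^]\<^bsub>G\<^esub> r))"
    by (rule prod_shift_eq[where f="\<lambda>r. \<mu> x (x [^]\<^bsub>G\<^esub> r)"]) (use xN nz inc[of 0] inc xc in auto)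
  have n1: "(\<Prod>r<N. \<mu> (x [^]\<^bsub>G\<^esub> r) x) \<noteq> 0" using nz inc xc by (simp add: prod_zero_iff)
  have n2: "(\<Prod>r<N. \<mu> x (x [^]\<^bsub>G\<^esub> r)) \<noteq> 0" using nz inc xc by (simp add: prod_zero_iff)
  show ?thesis unfolding P_def t
    by (simp add: prod_dividef prod.distrib s1 s2 n1 n2 del: nat_pow_Suc)
qed

end



lemma coc_pow: assumes "normalized_3cocycle G \<omega>"
  shows "normalized_3cocycle G (\<lambda>a b c. \<omega> a b c ^ k)"
  using assms unfolding normalized_3cocycle_def
  by (simp add: power_mult_distrib[symmetric])

lemma prod_from1: fixes f :: "nat \<Rightarrow> complex"
  assumes "0 < n" "f 0 = 1" shows "(\<Prod>r<n. f r) = (\<Prod>r = 1..n - 1. f r)"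
proof -
  obtain m where m: "n = Suc m" using assms by (cases n) auto
  show ?thesis unfolding m prod.lessThan_Suc_shift using assms(2)
    by (simp add: prod.atLeast1_atMost_eq del: prod.lessThan_Suc)
qed

context cycx begin

lemma P_powk: "P (\<lambda>a b c. \<omega> a b c ^ k) x = P \<omega> x ^ k"
  unfolding P_def by (simp add: prod_power_distrib)

lemma periodic: fixes g :: "nat \<Rightarrow> complex"
  assumes "\<And>i m. g (i + m * N) = g i"
  shows "(\<Prod>r<s * N. g r) = (\<Prod>r<N. g r) ^ s"
proof -
  have "(\<Prod>r<s * N. g r) = (\<Prod>m<s. prod g {m * N..<m * N + N})"
    by (rule prod.nat_group[symmetric])
  also have "\<dots> = (\<Prod>m<s. \<Prod>r<N. g r)"
  proof (rule prod.cong[OF refl])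
    fix m
    have "prod g {m * N..<m * N + N} = prod g {0 + m * N..<N + m * N}" by (simp add: add.commute)
    also have "\<dots> = (\<Prod>i = 0..<N. g (i + m * N))" by (rule prod.shift_bounds_nat_ivl)
    also have "\<dots> = (\<Prod>r<N. g r)" using assms by (simp add: atLeast0LessThan)
    finally show "prod g {m * N..<m * N + N} = (\<Prod>r<N. g r)" .
  qed
  also have "\<dots> = (\<Prod>r<N. g r) ^ s" by simp
  finally show ?thesis .
qed

end

theorem mainTheorem11:
  fixes G :: "('g, 'b) monoid_scheme"
    and \<omega> :: "'g \<Rightarrow> 'g \<Rightarrow> 'g \<Rightarrow> complex"
    and x :: 'g
  assumes "group G"
    and "finite (carrier G)"
    and "normalized_3cocycle G \<omega>"
    and "x \<in> carrier G"
  shows "(\<forall>n::nat. 0 < n \<longrightarrow>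
            FS_ind G \<omega> n (Vx x) =
              (if x [^]\<^bsub>G\<^esub> n = \<one>\<^bsub>G\<^esub>
               then (\<Prod>r = 1..n - 1. \<omega> x (x [^]\<^bsub>G\<^esub> r) x) else 0))
       \<and> (\<forall>n::nat. 0 < n \<and> \<not> group.ord G x dvd n \<longrightarrow> FS_ind G \<omega> n (Vx x) = 0)
       \<and> (0 < res_class_order G \<omega> x
          \<and> FS_ind G \<omega> (group.ord G x) (Vx x) ^ res_class_order G \<omega> x = 1
          \<and> (\<forall>k. 0 < k \<and> k < res_class_order G \<omega> x \<longrightarrow>
                 FS_ind G \<omega> (group.ord G x) (Vx x) ^ k \<noteq> 1))
       \<and> (\<forall>s::nat. 0 < s \<longrightarrow>
            FS_ind G \<omega> (s * group.ord G x) (Vx x) = FS_ind G \<omega> (group.ord G x) (Vx x) ^ s)"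
proof -
  note grp = assms(1) and coc = assms(3) and x = assms(4)
  interpret cycx G x using assms by (simp add: cycx_def)
  have w1: "\<omega> x (x [^]\<^bsub>G\<^esub> (0::nat)) x = 1" using coc_norm[OF coc x x] by simp
  have FS: "FS_ind G \<omega> n (Vx x) = (if x [^]\<^bsub>G\<^esub> n = \<one>\<^bsub>G\<^esub> then (\<Prod>r<n. \<omega> x (x [^]\<^bsub>G\<^esub> r) x) else 0)"
    if "0 < n" for n using FS_Vx[OF grp coc x that] .
  have nu: "FS_ind G \<omega> N (Vx x) = P \<omega> x"
    using FS[OF N_pos] xN unfolding P_def by simp
  have nuN: "P \<omega> x ^ N = 1"
    using P_pow[OF coc, of N] xN P_one[OF coc] by simp
  have part1: "\<forall>n::nat. 0 < n \<longrightarrow>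
            FS_ind G \<omega> n (Vx x) =
              (if x [^]\<^bsub>G\<^esub> n = \<one>\<^bsub>G\<^esub>
               then (\<Prod>r = 1..n - 1. \<omega> x (x [^]\<^bsub>G\<^esub> r) x) else 0)"
    using FS prod_from1[where f="\<lambda>r. \<omega> x (x [^]\<^bsub>G\<^esub> r) x", OF _ w1] by simp
  have part2: "\<forall>n::nat. 0 < n \<and> \<not> N dvd n \<longrightarrow> FS_ind G \<omega> n (Vx x) = 0"
    using FS group.pow_eq_id[OF grp x] by simp
  define R where "R = res_class_order G \<omega> x"
  have ex: "0 < N \<and> is_coboundary_on G (cyc G x) (\<lambda>a b c. \<omega> a b c ^ N)"
    using N_pos cob[OF coc_pow[OF coc], of N] P_powk[of \<omega> N] nuN by simp
  have R: "0 < R \<and> is_coboundary_on G (cyc G x) (\<lambda>a b c. \<omega> a b c ^ R)"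
    unfolding R_def res_class_order_def by (rule LeastI[of _ N]) (rule ex)
  have part3a: "P \<omega> x ^ R = 1"
    using cob_P[OF coc_pow[OF coc] conjunct2[OF R]] P_powk by simp
  have part3b: "P \<omega> x ^ k \<noteq> 1" if "0 < k" "k < R" for k
  proof
    assume "P \<omega> x ^ k = 1"
    then have "is_coboundary_on G (cyc G x) (\<lambda>a b c. \<omega> a b c ^ k)"
      using cob[OF coc_pow[OF coc], of k] P_powk by simp
    then have "R \<le> k" unfolding R_def res_class_order_def using that(1) by (simp add: Least_le)
    then show False using that(2) by simp
  qed
  have part4: "FS_ind G \<omega> (s * N) (Vx x) = FS_ind G \<omega> N (Vx x) ^ s" if "0 < s" for s
  proof -
    have "x [^]\<^bsub>G\<^esub> (s * N) = \<one>\<^bsub>G\<^esub>" using group.pow_eq_id[OF grp x] by simp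
    then have "FS_ind G \<omega> (s * N) (Vx x) = (\<Prod>r<s * N. \<omega> x (x [^]\<^bsub>G\<^esub> r) x)"
      using FS[of "s * N"] that N_pos by simp
    also have "\<dots> = (\<Prod>r<N. \<omega> x (x [^]\<^bsub>G\<^esub> r) x) ^ s"
      by (rule periodic) (simp add: pow_add_N)
    finally show ?thesis using nu unfolding P_def by simp
  qed
  show ?thesis
    using part1 part2 R part3a part3b part4 nu unfolding R_def by auto
qed


end
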